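(* Let $J$ be an abelian topological semigroup with identity $0$ and $X$ a topological vector space over $\mathbf{C}$. If $\phi\in P^n(J,X)$, then $\phi=\sum_{j=0}^n a_j$ where $a_j\in P^j(J,X)$ and $a_j(mt)=m^j a_j(t)$ for all $m\in\mathbf{Z}_+$ and $t\in J$.
   Context: $\mathbf{Z}_+=\{0,1,2,\dots\}$. A continuous $p:J\to X$ is a polynomial of degree at most $n$ if for all $s,t\in J$ there are $a_0(s,t),\dots,a_n(s,t)\in X$ with $p(s+mt)=\sum_{j=0}^n a_j(s,t)m^j$ for all $m\in\mathbf{Z}_+$; $P^n(J,X)$ is the space of such polynomials. *)

theory Defs
  imports "HOL-Analysis.Analysis"
begin

class complex_tvs = topological_comm_monoid_add + ab_group_add +
  fixes scaleC :: "complex \<Rightarrow> 'a \<Rightarrow> 'a"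
  assumes scaleC_add_right: "scaleC c (x + y) = scaleC c x + scaleC c y"
    and scaleC_add_left: "scaleC (c + d) x = scaleC c x + scaleC d x"
    and scaleC_scaleC: "scaleC c (scaleC d x) = scaleC (c * d) x"
    and scaleC_one: "scaleC 1 x = x"
    and continuous_scaleC: "((\<lambda>z. scaleC (fst z) (snd z)) \<longlongrightarrow> scaleC c x) (nhds c \<times>\<^sub>F nhds x)"

definition natmult :: "nat \<Rightarrow> 'a::monoid_add \<Rightarrow> 'a" where
  "natmult m t = (((+) t) ^^ m) 0"

definition poly_space :: "nat \<Rightarrow> ('a::topological_comm_monoid_add \<Rightarrow> 'b::complex_tvs) set" where
  "poly_space n = {p. continuous_on UNIV p \<and>
     (\<forall>s t. \<exists>a :: nat \<Rightarrow> 'b. \<forall>m::nat.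
        p (s + natmult m t) = (\<Sum>j\<le>n. scaleC ((of_nat m) ^ j) (a j)))}"

end

theory Submission imports Defs "HOL-Computational_Algebra.Polynomial" begin

definition lagr :: "nat \<Rightarrow> nat \<Rightarrow> complex poly" where
  "lagr D m = smult (1 / (\<Prod>i\<in>{..D}-{m}. (of_nat m - of_nat i)))
      (\<Prod>i\<in>{..D}-{m}. [:- of_nat i, 1:])"

lemma degree_lagr: assumes "m \<le> D" shows "degree (lagr D m) \<le> D"
proof -
  have "degree (\<Prod>i\<in>{..D}-{m}. [:- of_nat i, 1::complex:]) \<le> sum (degree \<circ> (\<lambda>i. [:- of_nat i, 1::complex:])) ({..D}-{m})"
    by (rule degree_prod_sum_le) simp
  also have "\<dots> = card ({..D}-{m})" by (simp add: o_def)
  also have "\<dots> \<le> D" using assms by (subst card_Diff_singleton_if) auto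
  finally show ?thesis unfolding lagr_def by (simp add: le_trans[OF degree_smult_le])
qed

lemma poly_lagr: "i \<le> D \<Longrightarrow> m \<le> D \<Longrightarrow> poly (lagr D m) (of_nat i) = (if i = m then 1 else 0)"
proof -
  assume i: "i \<le> D" and m: "m \<le> D"
  have nz: "(\<Prod>i\<in>{..D}-{m}. (of_nat m - of_nat i :: complex)) \<noteq> 0"
    by (subst prod_zero_iff) auto
  show ?thesis
  proof (cases "i = m")
    case True then show ?thesis using nz by (simp add: lagr_def poly_prod)
  next
    case False
    have "(\<Prod>j\<in>{..D}-{m}. (of_nat i - of_nat j :: complex)) = 0"
      using i False by (subst prod_zero_iff) auto
    then show ?thesis using False by (simp add: lagr_def poly_prod)
  qed
qed

lemma lam_exists:
  assumes "k \<le> D"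
  shows "\<exists>lam::nat\<Rightarrow>complex. \<forall>j\<le>D. (\<Sum>m\<le>D. lam m * of_nat m ^ j) = (if j = k then 1 else 0)"
proof (intro exI allI impI)
  fix j assume j: "j \<le> D"
  define P where "P = (\<Sum>m\<le>D. smult (of_nat m ^ j) (lagr D m))"
  have degP: "degree P \<le> D" unfolding P_def
    by (rule degree_sum_le) (auto intro: le_trans[OF degree_smult_le] degree_lagr) 
  have "P = monom 1 j"
  proof (rule poly_eqI_degree[of "of_nat ` {..D}"])
    fix x :: complex assume "x \<in> of_nat ` {..D}"
    then obtain i where i: "i \<le> D" "x = of_nat i" by auto
    have "poly P x = (\<Sum>m\<le>D. (if i = m then of_nat m ^ j else 0))"
      unfolding P_def using i by (intro trans[OF poly_sum] sum.cong) (auto simp: poly_lagr)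
    also have "\<dots> = of_nat i ^ j" using i by (simp add: sum.delta)
    finally show "poly P x = poly (monom 1 j) x" using i by (simp add: poly_monom)
  next
    have "card (of_nat ` {..D} :: complex set) = Suc D"
      by (subst card_image) (auto simp: inj_on_def)
    then show "degree P < card (of_nat ` {..D} :: complex set)" "degree (monom (1::complex) j) < card (of_nat ` {..D} :: complex set)"
      using degP j by (auto simp: degree_monom_eq)
  qed
  then have "coeff P k = (if j = k then 1 else 0)" by simp
  then show "(\<Sum>m\<le>D. coeff (lagr D m) k * of_nat m ^ j) = (if j = k then 1 else 0)"
    unfolding P_def by (simp add: coeff_sum mult.commute)
qed

lemma module_scaleC: "module (scaleC :: complex \<Rightarrow> 'a::complex_tvs \<Rightarrow> 'a)"
  by unfold_locales (auto simp: scaleC_add_right scaleC_add_left scaleC_scaleC scaleC_one)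

lemmas sC_sum_right = module.scale_sum_right[OF module_scaleC]
lemmas sC_sum_left = module.scale_sum_left[OF module_scaleC]
lemmas sC_zero_left[simp] = module.scale_zero_left[OF module_scaleC]
lemmas sC_zero_right[simp] = module.scale_zero_right[OF module_scaleC]

definition lam :: "nat \<Rightarrow> nat \<Rightarrow> nat \<Rightarrow> complex" where
  "lam D k = (SOME l. \<forall>j\<le>D. (\<Sum>m\<le>D. l m * of_nat m ^ j) = (if j = k then 1 else 0))"

lemma lam_prop:
  assumes "k \<le> D" "j \<le> D"
  shows "(\<Sum>m\<le>D. lam D k m * of_nat m ^ j) = (if j = k then 1 else 0)"
  using someI_ex[OF lam_exists[OF assms(1)]] assms(2) unfolding lam_def by blast

lemma ext_coeff:
  fixes c :: "nat \<Rightarrow> 'a::complex_tvs"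
  assumes f: "\<And>m. f m = (\<Sum>j\<le>n. scaleC (of_nat m ^ j) (c j))" and "n \<le> D" "k \<le> D"
  shows "(\<Sum>m\<le>D. scaleC (lam D k m) (f m)) = (if k \<le> n then c k else 0)"
proof -
  have "(\<Sum>m\<le>D. scaleC (lam D k m) (f m)) = (\<Sum>m\<le>D. \<Sum>j\<le>n. scaleC (lam D k m * of_nat m ^ j) (c j))"
    by (simp add: f sC_sum_right scaleC_scaleC)
  also have "\<dots> = (\<Sum>j\<le>n. \<Sum>m\<le>D. scaleC (lam D k m * of_nat m ^ j) (c j))"
    by (rule sum.swap)
  also have "\<dots> = (\<Sum>j\<le>n. scaleC (\<Sum>m\<le>D. lam D k m * of_nat m ^ j) (c j))"
    by (simp add: sC_sum_left)
  also have "\<dots> = (\<Sum>j\<le>n. if j = k then c j else 0)"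
    using assms(2,3) by (intro sum.cong) (auto simp: lam_prop scaleC_one)
  also have "\<dots> = (if k \<le> n then c k else 0)" by (simp add: sum.delta')
  finally show ?thesis .
qed

lemma natmult_0[simp]: "natmult 0 t = 0" by (simp add: natmult_def)
lemma natmult_Suc[simp]: "natmult (Suc m) t = t + natmult m t" by (simp add: natmult_def)
lemma natmult_1[simp]: "natmult 1 t = t" by simp
lemma natmult_add_left: "natmult (a + b) t = natmult a t + natmult b (t::'a::comm_monoid_add)"
  by (induction a) (auto simp: add.assoc)
lemma natmult_add_right: "natmult m (s + t) = natmult m s + natmult m (t::'a::comm_monoid_add)"
  by (induction m) (auto simp: algebra_simps)
lemma natmult_mult: "natmult m (natmult k t) = natmult (m * k) (t::'a::comm_monoid_add)"
  by (induction m) (auto simp: natmult_add_left)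
lemma natmult_cont: "continuous_on UNIV (natmult m :: 'a::topological_comm_monoid_add \<Rightarrow> 'a)"
proof (induction m)
  case 0 then show ?case by (simp add: natmult_def)
next
  case (Suc m)
  have "continuous_on UNIV (\<lambda>t::'a. t + natmult m t)"
    by (intro continuous_on_add continuous_on_id Suc)
  then show ?case by simp
qed

lemma scaleC_cont:
  fixes f :: "'c::topological_space \<Rightarrow> 'a::complex_tvs"
  assumes "continuous_on UNIV f"
  shows "continuous_on UNIV (\<lambda>x. scaleC c (f x))"
  unfolding continuous_on_def
proof
  fix x :: 'c
  have "(f \<longlongrightarrow> f x) (at x within UNIV)" using assms by (simp add: continuous_on_def)
  then have "filterlim (\<lambda>y. (c, f y)) (nhds c \<times>\<^sub>F nhds (f x)) (at x within UNIV)"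
    by (intro filterlim_Pair tendsto_const)
  from filterlim_compose[OF continuous_scaleC this]
  show "((\<lambda>x. scaleC c (f x)) \<longlongrightarrow> scaleC c (f x)) (at x within UNIV)" by simp
qed

lemma two_dim:
  fixes \<phi> :: "'a::topological_comm_monoid_add \<Rightarrow> 'b::complex_tvs"
  assumes P: "\<forall>s t. \<exists>a :: nat \<Rightarrow> 'b. \<forall>m::nat.
        \<phi> (s + natmult m t) = (\<Sum>j\<le>n. scaleC ((of_nat m) ^ j) (a j))"
  shows "\<exists>c. \<forall>N l. \<phi> (natmult N s + natmult l t) =
            (\<Sum>a\<le>n. \<Sum>b\<le>n. scaleC (of_nat N ^ a * of_nat l ^ b) (c a b))"
proof -
  have "\<forall>l. \<exists>e. \<forall>N. \<phi> (natmult l t + natmult N s) = (\<Sum>a\<le>n. scaleC (of_nat N ^ a) (e a))"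
    using P by blast
  then obtain e where e: "\<And>l N. \<phi> (natmult l t + natmult N s) = (\<Sum>a\<le>n. scaleC (of_nat N ^ a) (e l a))"
    by metis
  define c where "c a b = (\<Sum>l'\<le>n. scaleC (lam n b l') (e l' a))" for a b
  show ?thesis
  proof (intro exI allI)
    fix N l
    obtain d where d: "\<And>l. \<phi> (natmult N s + natmult l t) = (\<Sum>b\<le>n. scaleC (of_nat l ^ b) (d b))"
      using P by metis
    have dd: "d b = (\<Sum>l'\<le>n. scaleC (lam n b l') (\<phi> (natmult N s + natmult l' t)))" if "b \<le> n" for b
      using ext_coeff[where f="\<lambda>l. \<phi> (natmult N s + natmult l t)" and n=n and c=d and D=n and k=b, OF d] that by simp
    have "\<phi> (natmult N s + natmult l t) = (\<Sum>b\<le>n. scaleC (of_nat l ^ b)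
        (\<Sum>l'\<le>n. scaleC (lam n b l') (\<Sum>a\<le>n. scaleC (of_nat N ^ a) (e l' a))))" (is "_ = ?L'")
      unfolding d by (intro sum.cong refl) (simp add: dd e[symmetric] add.commute)
    also have "\<dots> = (\<Sum>b\<le>n. \<Sum>a\<le>n. \<Sum>l'\<le>n. scaleC (of_nat N ^ a * of_nat l ^ b) (scaleC (lam n b l') (e l' a)))"
      (is "_ = ?R")
    proof -
      have "?L' = (\<Sum>b\<le>n. \<Sum>l'\<le>n. \<Sum>a\<le>n. scaleC (of_nat l ^ b * (lam n b l' * of_nat N ^ a)) (e l' a))"
        (is "_ = ?M")
        by (simp add: sC_sum_right scaleC_scaleC)
      also have "\<dots> = (\<Sum>b\<le>n. \<Sum>a\<le>n. \<Sum>l'\<le>n. scaleC (of_nat l ^ b * (lam n b l' * of_nat N ^ a)) (e l' a))"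
        by (rule sum.cong[OF refl], rule sum.swap)
      also have "\<dots> = ?R" by (simp add: scaleC_scaleC mult_ac)
      finally show ?thesis .
    qed
    also have "\<dots> = (\<Sum>a\<le>n. \<Sum>b\<le>n. scaleC (of_nat N ^ a * of_nat l ^ b) (c a b))"
      by (subst sum.swap) (simp add: c_def sC_sum_right)
    finally show "\<phi> (natmult N s + natmult l t) =
            (\<Sum>a\<le>n. \<Sum>b\<le>n. scaleC (of_nat N ^ a * of_nat l ^ b) (c a b))" .
  qed
qed

lemma aux_pow: "(of_nat m ^ a * (of_nat m * of_nat k) ^ b :: complex) = of_nat m ^ (a+b) * of_nat k ^ b"
  by (simp add: power_add power_mult_distrib algebra_simps)

theorem proposition2p3:
  fixes \<phi> :: "'a::topological_comm_monoid_add \<Rightarrow> 'b::complex_tvs"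
    and n :: nat
  assumes "\<phi> \<in> poly_space n"
  shows "\<exists>a :: nat \<Rightarrow> 'a \<Rightarrow> 'b.
           \<phi> = (\<lambda>t. \<Sum>j\<le>n. a j t) \<and>
           (\<forall>j\<le>n. a j \<in> poly_space j \<and>
              (\<forall>m::nat. \<forall>t. a j (natmult m t) = scaleC ((of_nat m) ^ j) (a j t)))"
proof -
  have cont: "continuous_on UNIV \<phi>" and P: "\<forall>s t. \<exists>a :: nat \<Rightarrow> 'b. \<forall>m::nat.
        \<phi> (s + natmult m t) = (\<Sum>j\<le>n. scaleC ((of_nat m) ^ j) (a j))"
    using assms unfolding poly_space_def by auto
  define A where "A j x = (\<Sum>m\<le>2*n. scaleC (lam (2*n) j m) (\<phi> (natmult m x)))" for j x
  have K: "\<phi> (natmult m x) = (\<Sum>i\<le>n. scaleC (of_nat m ^ i) (A i x))" for m x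
  proof -
    obtain c where c: "\<And>m. \<phi> (0 + natmult m x) = (\<Sum>j\<le>n. scaleC (of_nat m ^ j) (c j))"
      using P by metis
    have "A i x = c i" if "i \<le> n" for i
      unfolding A_def using ext_coeff[where f="\<lambda>m. \<phi> (natmult m x)" and n=n and c=c and D="2*n" and k=i] c that
      by simp
    then show ?thesis using c[of m] by simp
  qed
  show ?thesis
  proof (intro exI conjI allI impI)
    show "\<phi> = (\<lambda>t. \<Sum>j\<le>n. A j t)"
    proof
      fix t show "\<phi> t = (\<Sum>j\<le>n. A j t)" using K[of 1 t] by (simp add: scaleC_one)
    qed
  next
    fix j m t assume j: "j \<le> n"
    have "\<phi> (natmult k (natmult m t)) = (\<Sum>i\<le>n. scaleC (of_nat k ^ i) (scaleC (of_nat m ^ i) (A i t)))" for k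
      unfolding natmult_mult K by (simp add: scaleC_scaleC power_mult_distrib)
    from ext_coeff[where f="\<lambda>k. \<phi> (natmult k (natmult m t))" and n=n and c="\<lambda>i. scaleC (of_nat m ^ i) (A i t)" and D="2*n" and k=j, OF this] j
    show "A j (natmult m t) = scaleC (of_nat m ^ j) (A j t)" unfolding A_def by simp
  next
    fix j assume j: "j \<le> n"
    have "continuous_on UNIV (A j)"
      unfolding A_def
      by (intro continuous_on_sum scaleC_cont continuous_on_compose2[OF cont natmult_cont]) auto
    moreover have "\<exists>b :: nat \<Rightarrow> 'b. \<forall>k::nat. A j (s + natmult k t) = (\<Sum>i\<le>j. scaleC ((of_nat k) ^ i) (b i))" for s t
    proof -
      obtain c where c: "\<And>N l. \<phi> (natmult N s + natmult l t) =
            (\<Sum>a\<le>n. \<Sum>b\<le>n. scaleC (of_nat N ^ a * of_nat l ^ b) (c a b))"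
        using two_dim[OF P, of s t] by blast
      define B where "B b = (\<Sum>a\<le>n. if a + b = j then c a b else 0)" for b
      show ?thesis
      proof (intro exI allI)
        fix k
        have "A j (s + natmult k t) = (\<Sum>m\<le>2*n. scaleC (lam (2*n) j m)
             (\<Sum>a\<le>n. \<Sum>b\<le>n. scaleC (of_nat m ^ (a + b)) (scaleC (of_nat k ^ b) (c a b))))"
          unfolding A_def natmult_add_right natmult_mult c
          by (simp add: scaleC_scaleC aux_pow)
        also have "\<dots> = (\<Sum>a\<le>n. \<Sum>b\<le>n. \<Sum>m\<le>2*n. scaleC (lam (2*n) j m * of_nat m ^ (a + b)) (scaleC (of_nat k ^ b) (c a b)))"
        proof -
          have "(\<Sum>m\<le>2*n. scaleC (lam (2*n) j m)
             (\<Sum>a\<le>n. \<Sum>b\<le>n. scaleC (of_nat m ^ (a + b)) (scaleC (of_nat k ^ b) (c a b))))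
            = (\<Sum>m\<le>2*n. \<Sum>a\<le>n. \<Sum>b\<le>n. scaleC (lam (2*n) j m * of_nat m ^ (a + b)) (scaleC (of_nat k ^ b) (c a b)))"
            by (simp add: sC_sum_right scaleC_scaleC mult.assoc)
          also have "\<dots> = (\<Sum>a\<le>n. \<Sum>m\<le>2*n. \<Sum>b\<le>n. scaleC (lam (2*n) j m * of_nat m ^ (a + b)) (scaleC (of_nat k ^ b) (c a b)))"
            by (rule sum.swap)
          also have "\<dots> = (\<Sum>a\<le>n. \<Sum>b\<le>n. \<Sum>m\<le>2*n. scaleC (lam (2*n) j m * of_nat m ^ (a + b)) (scaleC (of_nat k ^ b) (c a b)))"
            by (rule sum.cong[OF refl], rule sum.swap)
          finally show ?thesis .
        qed
        also have "\<dots> = (\<Sum>a\<le>n. \<Sum>b\<le>n. if a + b = j then scaleC (of_nat k ^ b) (c a b) else 0)"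
        proof (intro sum.cong refl)
          fix a b assume "a \<in> {..n}" "b \<in> {..n}"
          then have "a + b \<le> 2*n" by simp
          then show "(\<Sum>m\<le>2*n. scaleC (lam (2*n) j m * of_nat m ^ (a + b)) (scaleC (of_nat k ^ b) (c a b)))
              = (if a + b = j then scaleC (of_nat k ^ b) (c a b) else 0)"
            using j by (simp add: sC_sum_left[symmetric] lam_prop scaleC_one)
        qed
        also have "\<dots> = (\<Sum>b\<le>n. \<Sum>a\<le>n. if a + b = j then scaleC (of_nat k ^ b) (c a b) else 0)"
          by (rule sum.swap)
        also have "\<dots> = (\<Sum>b\<le>n. scaleC (of_nat k ^ b) (B b))"
          unfolding B_def sC_sum_right by (intro sum.cong refl) simp
        also have "\<dots> = (\<Sum>b\<le>j. scaleC (of_nat k ^ b) (B b))"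
          using j by (intro sum.mono_neutral_right) (auto simp: B_def)
        finally show "A j (s + natmult k t) = (\<Sum>i\<le>j. scaleC (of_nat k ^ i) (B i))" .
      qed
    qed
    ultimately show "A j \<in> poly_space j" unfolding poly_space_def by blast
  qed
qed

end
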